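(* Let $Q$ be a quadrilateral in $K^2$ and let $f:K^2\to K^2$ be an invertible linear transformation. There is $\lambda\in K$ such that for all $\mathbf v,\mathbf w\in K^2$, $$\langle \mathbf v,\mathbf w\rangle_Q=\lambda\langle f(\mathbf v),f(\mathbf w)\rangle_{f(Q)}.$$ Thus a pair of lines $\ell_1,\ell_2$ is $Q$-orthogonal if and only if $f(\ell_1),f(\ell_2)$ is $f(Q)$-orthogonal.
   Context: $K$ is a field of characteristic $\neq 2$. Every line $L$ in $K^2$ has an equation $tX-uY+v=0$ normalized so that $t=1$ if $u=0$ and $u=1$ if $u\neq 0$; coefficients denoted $t_L,u_L,v_L$. A quadrilateral $Q=ABA'B'$ consists of four distinct lines $A,B,A',B'$ (sides), not all through one point, with adjacent sides ($A,B$; $B,A'$; $A',B'$; $B',A$) not parallel; opposite sides may be parallel (three sides may be concurrent). $f(Q)$ denotes the quadrilateral $f(A)f(B)f(A')f(B')$. For $Q=ABA'B'$ let $\alpha=t_Au_Bu_{A'}u_{B'}-u_At_Bu_{A'}u_{B'}+u_Au_Bt_{A'}u_{B'}-u_Au_Bu_{A'}t_{B'}$, $\beta=t_Au_Bt_{A'}u_{B'}-u_At_Bu_{A'}t_{B'}$, $\gamma=t_At_Bt_{A'}u_{B'}-t_At_Bu_{A'}t_{B'}+t_Au_Bt_{A'}t_{B'}-u_At_Bt_{A'}t_{B'}$, and $\langle \mathbf v,\mathbf w\rangle_Q=\mathbf v^T\begin{pmatrix}\gamma&-\beta\\-\beta&\alpha\end{pmatrix}\mathbf w$. Lines $\ell_1,\ell_2$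 are $Q$-orthogonal if $\langle (u_{\ell_1},t_{\ell_1}),(u_{\ell_2},t_{\ell_2})\rangle_Q=0$. *)

theory Defs
  imports Main
begin

definition line_eq :: "'a::field \<Rightarrow> 'a \<Rightarrow> 'a \<Rightarrow> ('a \<times> 'a) set" where
  "line_eq t u v = {(x, y). t * x - u * y + v = 0}"

definition is_line :: "('a::field \<times> 'a) set \<Rightarrow> bool" where
  "is_line L \<longleftrightarrow> (\<exists>t u v. (t \<noteq> 0 \<or> u \<noteq> 0) \<and> L = line_eq t u v)"

definition normalized :: "'a::field \<Rightarrow> 'a \<Rightarrow> bool" where
  "normalized t u \<longleftrightarrow> (if u = 0 then t = 1 else u = 1)"

definition line_coeffs :: "('a::field \<times> 'a) set \<Rightarrow> 'a \<times> 'a \<times> 'a" where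
  "line_coeffs L = (THE (t, u, v). normalized t u \<and> L = line_eq t u v)"

definition t_of :: "('a::field \<times> 'a) set \<Rightarrow> 'a" where
  "t_of L = fst (line_coeffs L)"
definition u_of :: "('a::field \<times> 'a) set \<Rightarrow> 'a" where
  "u_of L = fst (snd (line_coeffs L))"
definition v_of :: "('a::field \<times> 'a) set \<Rightarrow> 'a" where
  "v_of L = snd (snd (line_coeffs L))"

definition parallel :: "('a \<times> 'a) set \<Rightarrow> ('a \<times> 'a) set \<Rightarrow> bool" where
  "parallel L M \<longleftrightarrow> L = M \<or> L \<inter> M = {}"

definition quadrilateral ::
  "('a::field \<times> 'a) set \<Rightarrow> ('a \<times> 'a) set \<Rightarrow> ('a \<times> 'a) set \<Rightarrow> ('a \<times> 'a) set \<Rightarrow> bool" where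
  "quadrilateral A B A' B' \<longleftrightarrow>
     is_line A \<and> is_line B \<and> is_line A' \<and> is_line B' \<and>
     distinct [A, B, A', B'] \<and>
     A \<inter> B \<inter> A' \<inter> B' = {} \<and>
     \<not> parallel A B \<and> \<not> parallel B A' \<and> \<not> parallel A' B' \<and> \<not> parallel B' A"

definition q_alpha :: "('a::field \<times> 'a) set \<Rightarrow> ('a \<times> 'a) set \<Rightarrow> ('a \<times> 'a) set \<Rightarrow> ('a \<times> 'a) set \<Rightarrow> 'a" where
  "q_alpha A B A' B' =
     t_of A * u_of B * u_of A' * u_of B' - u_of A * t_of B * u_of A' * u_of B'
   + u_of A * u_of B * t_of A' * u_of B' - u_of A * u_of B * u_of A' * t_of B'"

definition q_beta :: "('a::field \<times> 'a) set \<Rightarrow> ('a \<times> 'a) set \<Rightarrow> ('a \<times> 'a) set \<Rightarrow> ('a \<times> 'a) set \<Rightarrow> 'a" where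
  "q_beta A B A' B' =
     t_of A * u_of B * t_of A' * u_of B' - u_of A * t_of B * u_of A' * t_of B'"

definition q_gamma :: "('a::field \<times> 'a) set \<Rightarrow> ('a \<times> 'a) set \<Rightarrow> ('a \<times> 'a) set \<Rightarrow> ('a \<times> 'a) set \<Rightarrow> 'a" where
  "q_gamma A B A' B' =
     t_of A * t_of B * t_of A' * u_of B' - t_of A * t_of B * u_of A' * t_of B'
   + t_of A * u_of B * t_of A' * t_of B' - u_of A * t_of B * t_of A' * t_of B'"

definition q_form ::
  "('a::field \<times> 'a) set \<Rightarrow> ('a \<times> 'a) set \<Rightarrow> ('a \<times> 'a) set \<Rightarrow> ('a \<times> 'a) set \<Rightarrow> 'a \<times> 'a \<Rightarrow> 'a \<times> 'a \<Rightarrow> 'a" where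
  "q_form A B A' B' v w =
     (let \<alpha> = q_alpha A B A' B'; \<beta> = q_beta A B A' B'; \<gamma> = q_gamma A B A' B' in
      fst v * (\<gamma> * fst w - \<beta> * snd w) + snd v * (- \<beta> * fst w + \<alpha> * snd w))"

definition q_orthogonal ::
  "('a::field \<times> 'a) set \<Rightarrow> ('a \<times> 'a) set \<Rightarrow> ('a \<times> 'a) set \<Rightarrow> ('a \<times> 'a) set \<Rightarrow>
   ('a \<times> 'a) set \<Rightarrow> ('a \<times> 'a) set \<Rightarrow> bool" where
  "q_orthogonal A B A' B' l1 l2 \<longleftrightarrow>
     q_form A B A' B' (u_of l1, t_of l1) (u_of l2, t_of l2) = 0"

definition invertible_linear :: "('a::field \<times> 'a \<Rightarrow> 'a \<times> 'a) \<Rightarrow> bool" where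
  "invertible_linear f \<longleftrightarrow>
     (\<exists>a b c d. a * d - b * c \<noteq> 0 \<and> f = (\<lambda>(x, y). (a * x + b * y, c * x + d * y)))"

end

theory Submission imports Defs begin

lemma line_eq_unique:
  fixes t u v t' u' v' :: "'a::field"
  assumes nz: "t \<noteq> 0 \<or> u \<noteq> 0" and nz': "t' \<noteq> 0 \<or> u' \<noteq> 0"
    and eq: "line_eq t u v = line_eq t' u' v'"
  shows "\<exists>k. k \<noteq> 0 \<and> t' = k*t \<and> u' = k*u \<and> v' = k*v"
proof (cases "u = 0")
  case False
  have p1: "(0, v/u) \<in> line_eq t u v" "(1, (t+v)/u) \<in> line_eq t u v"
    using False by (auto simp: line_eq_def field_simps)
  hence "(0, v/u) \<in> line_eq t' u' v'" "(1, (t+v)/u) \<in> line_eq t' u' v'" using eq by auto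
  hence e1: "- u' * (v/u) + v' = 0" "t' - u' * ((t+v)/u) + v' = 0"
    by (simp_all add: line_eq_def)
  have hv: "v' = (u'/u) * v" using e1(1) False by (simp add: field_simps)
  have "t' = u' * ((t+v)/u) - v'" using e1(2) by (simp add: algebra_simps)
  also have "... = u' * ((t+v)/u) - (u'/u) * v" using hv by simp
  also have "... = (u'/u) * t" using False by (simp add: field_simps)
  finally have ht: "t' = (u'/u) * t" .
  have "u'/u \<noteq> 0" using nz' ht False by auto
  thus ?thesis using hv ht False by (intro exI[of _ "u'/u"]) auto
next
  case True
  hence tnz: "t \<noteq> 0" using nz by auto
  have p1: "(-v/t, 0) \<in> line_eq t u v" "(-v/t, 1) \<in> line_eq t u v"
    using True tnz by (auto simp: line_eq_def field_simps)
  hence "(-v/t, 0) \<in> line_eq t' u' v'" "(-v/t, 1) \<in> line_eq t' u' v'" using eq by auto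
  hence e1: "t' * (-v/t) + v' = 0" "t' * (-v/t) - u' + v' = 0"
    by (simp_all add: line_eq_def)
  have hu: "u' = 0" using e1 by (simp add: algebra_simps)
  have hv: "v' = (t'/t) * v" using e1(1) tnz by (simp add: field_simps)
  have "t'/t \<noteq> 0" using nz' hu tnz by auto
  thus ?thesis using hv hu True tnz by (intro exI[of _ "t'/t"]) auto
qed

lemma normalized_nz: "normalized t u \<Longrightarrow> t \<noteq> 0 \<or> u \<noteq> 0"
  by (auto simp: normalized_def split: if_splits)

lemma coeffs_ok:
  fixes L :: "('a::field \<times> 'a) set"
  assumes "is_line L"
  shows "normalized (t_of L) (u_of L) \<and> L = line_eq (t_of L) (u_of L) (v_of L)"
proof -
  obtain t u v where nz: "t \<noteq> 0 \<or> u \<noteq> 0" and L: "L = line_eq t u v"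
    using assms by (auto simp: is_line_def)
  define P where "P = (\<lambda>(t, u, v). normalized t u \<and> L = line_eq t u (v::'a))"
  have ex: "\<exists>x. P x"
  proof (cases "u = 0")
    case True
    hence "line_eq t u v = line_eq 1 0 (v/t)" using nz
      by (auto simp: line_eq_def field_simps)
    thus ?thesis using L by (intro exI[of _ "(1, 0, v/t)"]) (auto simp: P_def normalized_def)
  next
    case False
    hence "line_eq t u v = line_eq (t/u) 1 (v/u)"
      by (auto simp: line_eq_def field_simps)
    thus ?thesis using L by (intro exI[of _ "(t/u, 1, v/u)"]) (auto simp: P_def normalized_def)
  qed
  have un: "x = y" if "P x" "P y" for x y
  proof -
    obtain t1 u1 v1 where x: "x = (t1, u1, v1)" by (cases x) auto
    obtain t2 u2 v2 where y: "y = (t2, u2, v2)" by (cases y) auto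
    have n1: "normalized t1 u1" and n2: "normalized t2 u2"
      and e: "line_eq t1 u1 v1 = line_eq t2 u2 v2"
      using that x y by (auto simp: P_def)
    obtain k where k: "k \<noteq> 0" "t2 = k*t1" "u2 = k*u1" "v2 = k*v1"
      using line_eq_unique[OF normalized_nz[OF n1] normalized_nz[OF n2] e] by blast
    have "k = 1" using n1 n2 k by (auto simp: normalized_def split: if_splits)
    thus ?thesis using x y k by simp
  qed
  have "P (line_coeffs L)"
  proof -
    have "\<exists>!x. P x" using ex un by blast
    hence "P (THE x. P x)" by (rule theI')
    moreover have "(THE x. P x) = line_coeffs L"
      unfolding line_coeffs_def P_def by (rule refl)
    ultimately show ?thesis by simp
  qed
  thus ?thesis unfolding P_def t_of_def u_of_def v_of_def by (simp add: case_prod_beta)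
qed

lemma coeffs_rep:
  fixes L :: "('a::field \<times> 'a) set"
  assumes "is_line L" "t \<noteq> 0 \<or> u \<noteq> 0" "L = line_eq t u v"
  shows "\<exists>k. k \<noteq> 0 \<and> t_of L = k*t \<and> u_of L = k*u"
proof -
  have ok: "normalized (t_of L) (u_of L)" "L = line_eq (t_of L) (u_of L) (v_of L)"
    using coeffs_ok[OF assms(1)] by auto
  have e: "line_eq t u v = line_eq (t_of L) (u_of L) (v_of L)" using ok(2) assms(3) by simp
  show ?thesis using line_eq_unique[OF assms(2) normalized_nz[OF ok(1)] e] by blast
qed

lemma image_line:
  fixes a b c d :: "'a::field"
  assumes D: "a*d - b*c \<noteq> 0"
  shows "(\<lambda>(x, y). (a*x + b*y, c*x + d*y)) ` line_eq t u v
         = line_eq (c*u+d*t) (a*u+b*t) ((a*d-b*c)*v)"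
proof
  show "(\<lambda>(x, y). (a*x + b*y, c*x + d*y)) ` line_eq t u v
         \<subseteq> line_eq (c*u+d*t) (a*u+b*t) ((a*d-b*c)*v)"
  proof
    fix p assume "p \<in> (\<lambda>(x, y). (a*x + b*y, c*x + d*y)) ` line_eq t u v"
    then obtain x y where p: "p = (a*x + b*y, c*x + d*y)" and e: "t*x - u*y + v = 0"
      by (auto simp: line_eq_def)
    have "(c*u+d*t)*(a*x + b*y) - (a*u+b*t)*(c*x + d*y) + (a*d-b*c)*v = (a*d-b*c)*(t*x - u*y + v)"
      by (simp add: algebra_simps)
    thus "p \<in> line_eq (c*u+d*t) (a*u+b*t) ((a*d-b*c)*v)" using p e by (simp add: line_eq_def)
  qed
next
  show "line_eq (c*u+d*t) (a*u+b*t) ((a*d-b*c)*v)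
        \<subseteq> (\<lambda>(x, y). (a*x + b*y, c*x + d*y)) ` line_eq t u v"
  proof
    fix p assume pin: "p \<in> line_eq (c*u+d*t) (a*u+b*t) ((a*d-b*c)*v)"
    obtain X Y where p: "p = (X, Y)" by (cases p)
    define x where "x = (d*X - b*Y)/(a*d-b*c)"
    define y where "y = (a*Y - c*X)/(a*d-b*c)"
    have xD: "x*(a*d-b*c) = d*X - b*Y" using D unfolding x_def by simp
    have yD: "y*(a*d-b*c) = a*Y - c*X" using D unfolding y_def by simp
    have "(a*x + b*y)*(a*d-b*c) = a*(x*(a*d-b*c)) + b*(y*(a*d-b*c))" by (simp add: algebra_simps)
    also have "... = X*(a*d-b*c)" unfolding xD yD by (simp add: algebra_simps)
    finally have f1: "a*x + b*y = X" using D by simp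
    have "(c*x + d*y)*(a*d-b*c) = c*(x*(a*d-b*c)) + d*(y*(a*d-b*c))" by (simp add: algebra_simps)
    also have "... = Y*(a*d-b*c)" unfolding xD yD by (simp add: algebra_simps)
    finally have f2: "c*x + d*y = Y" using D by simp
    note fx = f1 f2
    have "(c*u+d*t)*(a*x + b*y) - (a*u+b*t)*(c*x + d*y) + (a*d-b*c)*v = (a*d-b*c)*(t*x - u*y + v)"
      by (simp add: algebra_simps)
    moreover have "(c*u+d*t)*X - (a*u+b*t)*Y + (a*d-b*c)*v = 0" using pin p by (simp add: line_eq_def)
    ultimately have "(a*d-b*c)*(t*x - u*y + v) = 0" using fx by simp
    hence "t*x - u*y + v = 0" using D by simp
    hence "(x, y) \<in> line_eq t u v" by (simp add: line_eq_def)
    thus "p \<in> (\<lambda>(x, y). (a*x + b*y, c*x + d*y)) ` line_eq t u v"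
      using p fx by (intro image_eqI[of _ _ "(x,y)"]) auto
  qed
qed

lemma line_trans:
  fixes a b c d :: "'a::field" and L :: "('a \<times> 'a) set"
  assumes D: "a*d - b*c \<noteq> 0" and L: "is_line L"
  shows "is_line ((\<lambda>(x, y). (a*x + b*y, c*x + d*y)) ` L) \<and>
    (\<exists>k. k \<noteq> 0 \<and> t_of ((\<lambda>(x, y). (a*x + b*y, c*x + d*y)) ` L) = k*(c*u_of L + d*t_of L)
               \<and> u_of ((\<lambda>(x, y). (a*x + b*y, c*x + d*y)) ` L) = k*(a*u_of L + b*t_of L))"
proof -
  have ok: "normalized (t_of L) (u_of L)" "L = line_eq (t_of L) (u_of L) (v_of L)"
    using coeffs_ok[OF L] by auto
  have nz: "t_of L \<noteq> 0 \<or> u_of L \<noteq> 0" using normalized_nz[OF ok(1)] .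
  have nz2: "c*u_of L + d*t_of L \<noteq> 0 \<or> a*u_of L + b*t_of L \<noteq> 0"
  proof (rule ccontr)
    assume "\<not> ?thesis"
    hence h: "c*u_of L + d*t_of L = 0" "a*u_of L + b*t_of L = 0" by auto
    have "(a*d-b*c) * u_of L = d*(a*u_of L + b*t_of L) - b*(c*u_of L + d*t_of L)"
      by (simp add: algebra_simps)
    hence "u_of L = 0" using h D by simp
    moreover have "(a*d-b*c) * t_of L = a*(c*u_of L + d*t_of L) - c*(a*u_of L + b*t_of L)"
      by (simp add: algebra_simps)
    hence "t_of L = 0" using h D by simp
    ultimately show False using nz by simp
  qed
  have img: "(\<lambda>(x, y). (a*x + b*y, c*x + d*y)) ` L
     = line_eq (c*u_of L + d*t_of L) (a*u_of L + b*t_of L) ((a*d-b*c)*v_of L)"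
    using image_line[OF D, of "t_of L" "u_of L" "v_of L"] ok(2) by simp
  have il: "is_line ((\<lambda>(x, y). (a*x + b*y, c*x + d*y)) ` L)"
    unfolding is_line_def img using nz2 by blast
  obtain k where "k \<noteq> 0" "t_of ((\<lambda>(x, y). (a*x + b*y, c*x + d*y)) ` L) = k*(c*u_of L + d*t_of L)"
      "u_of ((\<lambda>(x, y). (a*x + b*y, c*x + d*y)) ` L) = k*(a*u_of L + b*t_of L)"
    using coeffs_rep[OF il nz2 img] by blast
  with il show ?thesis by blast
qed

lemma form_trans:
  fixes a b c d :: "'a::field"
  assumes "t_of A2 = kA*(c*u_of A + d*t_of A)" "u_of A2 = kA*(a*u_of A + b*t_of A)"
    "t_of B2 = kB*(c*u_of B + d*t_of B)" "u_of B2 = kB*(a*u_of B + b*t_of B)"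
    "t_of C2 = kC*(c*u_of C + d*t_of C)" "u_of C2 = kC*(a*u_of C + b*t_of C)"
    "t_of D2 = kD*(c*u_of D + d*t_of D)" "u_of D2 = kD*(a*u_of D + b*t_of D)"
  shows "q_form A2 B2 C2 D2 (a*v1+b*v2, c*v1+d*v2) (a*w1+b*w2, c*w1+d*w2)
     = kA*kB*kC*kD*(a*d-b*c)^3 * q_form A B C D (v1, v2) (w1, w2)"
  unfolding q_form_def q_alpha_def q_beta_def q_gamma_def Let_def fst_conv snd_conv assms
  by algebra

lemma form_scale:
  "q_form A B C D (k*x, k*y) (m*z, m*w) = k*m*q_form A B C D (x, y) (z, w)"
  unfolding q_form_def Let_def by (simp add: algebra_simps)

theorem proposition2p8:
  fixes A B A' B' :: "('a::field \<times> 'a) set"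
    and f :: "'a \<times> 'a \<Rightarrow> 'a \<times> 'a"
  assumes char: "(2::'a) \<noteq> 0"
    and Q: "quadrilateral A B A' B'"
    and lin: "invertible_linear f"
  shows "(\<exists>c::'a. \<forall>v w. q_form A B A' B' v w
                  = c * q_form (f ` A) (f ` B) (f ` A') (f ` B') (f v) (f w))
       \<and> (\<forall>l1 l2. is_line l1 \<longrightarrow> is_line l2 \<longrightarrow>
            (q_orthogonal A B A' B' l1 l2 \<longleftrightarrow>
             q_orthogonal (f ` A) (f ` B) (f ` A') (f ` B') (f ` l1) (f ` l2)))"
proof -
  obtain a b c d where D: "a*d - b*c \<noteq> 0" and f: "f = (\<lambda>(x, y). (a*x + b*y, c*x + d*y))"
    using lin by (auto simp: invertible_linear_def)
  have lines: "is_line A" "is_line B" "is_line A'" "is_line B'"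
    using Q by (auto simp: quadrilateral_def)
  obtain kA where kA: "kA \<noteq> 0" "t_of (f ` A) = kA*(c*u_of A + d*t_of A)"
      "u_of (f ` A) = kA*(a*u_of A + b*t_of A)"
    using line_trans[OF D lines(1)] f by auto
  obtain kB where kB: "kB \<noteq> 0" "t_of (f ` B) = kB*(c*u_of B + d*t_of B)"
      "u_of (f ` B) = kB*(a*u_of B + b*t_of B)"
    using line_trans[OF D lines(2)] f by auto
  obtain kC where kC: "kC \<noteq> 0" "t_of (f ` A') = kC*(c*u_of A' + d*t_of A')"
      "u_of (f ` A') = kC*(a*u_of A' + b*t_of A')"
    using line_trans[OF D lines(3)] f by auto
  obtain kD where kD: "kD \<noteq> 0" "t_of (f ` B') = kD*(c*u_of B' + d*t_of B')"
      "u_of (f ` B') = kD*(a*u_of B' + b*t_of B')"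
    using line_trans[OF D lines(4)] f by auto
  define K where "K = kA*kB*kC*kD*(a*d-b*c)^3"
  have Knz: "K \<noteq> 0" using kA kB kC kD D by (simp add: K_def)
  have key: "q_form (f ` A) (f ` B) (f ` A') (f ` B') (f (v1, v2)) (f (w1, w2))
      = K * q_form A B A' B' (v1, v2) (w1, w2)" for v1 v2 w1 w2
    unfolding K_def using form_trans[OF kA(2,3) kB(2,3) kC(2,3) kD(2,3)] f by simp
  have part1: "\<forall>v w. q_form A B A' B' v w
                  = inverse K * q_form (f ` A) (f ` B) (f ` A') (f ` B') (f v) (f w)"
  proof (intro allI)
    fix v w :: "'a \<times> 'a"
    obtain v1 v2 where v: "v = (v1, v2)" by (cases v)
    obtain w1 w2 where w: "w = (w1, w2)" by (cases w)
    show "q_form A B A' B' v w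
                  = inverse K * q_form (f ` A) (f ` B) (f ` A') (f ` B') (f v) (f w)"
      using key Knz v w by simp
  qed
  have part2: "q_orthogonal A B A' B' l1 l2 \<longleftrightarrow>
             q_orthogonal (f ` A) (f ` B) (f ` A') (f ` B') (f ` l1) (f ` l2)"
    if l1: "is_line l1" and l2: "is_line l2" for l1 l2
  proof -
    obtain k1 where k1: "k1 \<noteq> 0" "t_of (f ` l1) = k1*(c*u_of l1 + d*t_of l1)"
      "u_of (f ` l1) = k1*(a*u_of l1 + b*t_of l1)"
      using line_trans[OF D l1] f by auto
    obtain k2 where k2: "k2 \<noteq> 0" "t_of (f ` l2) = k2*(c*u_of l2 + d*t_of l2)"
      "u_of (f ` l2) = k2*(a*u_of l2 + b*t_of l2)"
      using line_trans[OF D l2] f by auto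
    have e1: "(u_of (f ` l1), t_of (f ` l1)) = f (k1 * u_of l1, k1 * t_of l1)"
      using k1 f by (simp add: algebra_simps)
    have e2: "(u_of (f ` l2), t_of (f ` l2)) = f (k2 * u_of l2, k2 * t_of l2)"
      using k2 f by (simp add: algebra_simps)
    have "q_form (f ` A) (f ` B) (f ` A') (f ` B') (u_of (f ` l1), t_of (f ` l1)) (u_of (f ` l2), t_of (f ` l2))
       = K * (k1 * k2 * q_form A B A' B' (u_of l1, t_of l1) (u_of l2, t_of l2))"
      unfolding e1 e2 key form_scale ..
    thus ?thesis unfolding q_orthogonal_def using Knz k1 k2 by simp
  qed
  show ?thesis using part1 part2 by blast
qed

end
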